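(* Let $n\ge5$. There is a reciprocal recommendation task with $n$ users such that, for every $\alpha<1$ and every maximizer $u^\alpha$ of $W_\alpha$ over $\mathcal U$, and for every choice of $u^{\mathrm{eq},\beta}\in\mathcal U^{\mathrm{eq}}_\beta$ ($\beta>0$): (i) there exists $\beta>0$ such that $u^\alpha_i>u^{\mathrm{eq},\beta}_i$ for all $i\in[n]$; (ii) $\lim_{\beta\to\infty}\sum_{i=1}^n u^{\mathrm{eq},\beta}_i=0$.
   Context: Reciprocal recommendation task: $n$ users $[n]$ who are also the items, a symmetric matrix of mutual preference values $\mu_{ij}=\mu_{ji}\ge0$ ($i\neq j$), and exposure weights $v\in\mathbb R^{n-1}$ with $v_1\ge\dots\ge v_{n-1}\ge0$. Each user $i$ receives a stochastic ranking of the other users: a ranking tensor is $P=(P_{ijk})$, $i\in[n]$, $j\in[n]\setminus\{i\}$, $k\in[n-1]$, such that each $(P_{ijk})_{j,k}$ is doubly stochastic; $\mathcal P$ is the set of ranking tensors; $P_{ij}v=\sum_kP_{ijk}v_k$. The (two-sided) utility of user $i$ is $u_i(P)=\sum_{j\ne i}\mu_{ij}P_{ij}v+\sum_{j\neq i}\mu_{ij}P_{ji}v$; $\mathcal U=\{(u_i(P))_{i\in[n]}:P\in\mathcal P\}$. Welfare: $\psi(x,\alpha)=x^\alpha$ ($\alpha>0$), $\log x$ ($\alpha=0$), $-x^\alpha$ ($\alpha<0$), with $\psi(0,\alpha)=-\infty$ for $\alpha\le0$; $W_\alpha(u)=\sum_{i=1}^n\psi(u_i,\alpha)$. Equality of utility: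 $D(u)=\frac1n\sum_{j=1}^n\big(u_j-\frac1n\sum_{j'=1}^nu_{j'}\big)^2$, $F^{\mathrm{eq}}_\beta(u)=\sum_{i=1}^nu_i-\beta\sqrt{D(u)}$, $\mathcal U^{\mathrm{eq}}_\beta=\arg\max_{u\in\mathcal U}F^{\mathrm{eq}}_\beta(u)$. *)

theory Defs
  imports "HOL-Analysis.Analysis" "HOL-Library.Extended_Real"
begin

definition rr_task :: "nat \<Rightarrow> (nat \<Rightarrow> nat \<Rightarrow> real) \<Rightarrow> (nat \<Rightarrow> real) \<Rightarrow> bool" where
  "rr_task n mu v \<longleftrightarrow>
     (\<forall>i\<in>{1..n}. \<forall>j\<in>{1..n}. i \<noteq> j \<longrightarrow> mu i j = mu j i \<and> mu i j \<ge> 0) \<and>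
     (\<forall>k\<in>{1..n-1}. v k \<ge> 0) \<and>
     (\<forall>k l. 1 \<le> k \<longrightarrow> k \<le> l \<longrightarrow> l \<le> n - 1 \<longrightarrow> v l \<le> v k)"

definition ranking_tensor :: "nat \<Rightarrow> (nat \<Rightarrow> nat \<Rightarrow> nat \<Rightarrow> real) \<Rightarrow> bool" where
  "ranking_tensor n P \<longleftrightarrow>
     (\<forall>i\<in>{1..n}.
        (\<forall>j\<in>{1..n} - {i}. \<forall>k\<in>{1..n-1}. P i j k \<ge> 0) \<and>
        (\<forall>j\<in>{1..n} - {i}. (\<Sum>k\<in>{1..n-1}. P i j k) = 1) \<and>
        (\<forall>k\<in>{1..n-1}. (\<Sum>j\<in>{1..n} - {i}. P i j k) = 1))"

definition expo :: "nat \<Rightarrow> (nat \<Rightarrow> real) \<Rightarrow> (nat \<Rightarrow> nat \<Rightarrow> nat \<Rightarrow> real) \<Rightarrow> nat \<Rightarrow> nat \<Rightarrow> real" where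
  "expo n v P i j = (\<Sum>k\<in>{1..n-1}. P i j k * v k)"

definition utility :: "nat \<Rightarrow> (nat \<Rightarrow> nat \<Rightarrow> real) \<Rightarrow> (nat \<Rightarrow> real)
    \<Rightarrow> (nat \<Rightarrow> nat \<Rightarrow> nat \<Rightarrow> real) \<Rightarrow> nat \<Rightarrow> real" where
  "utility n mu v P i =
     (\<Sum>j\<in>{1..n} - {i}. mu i j * expo n v P i j) + (\<Sum>j\<in>{1..n} - {i}. mu i j * expo n v P j i)"

text \<open>The set U of achievable utility vectors (vectors are functions, set to 0 outside [n]).\<close>
definition util_set :: "nat \<Rightarrow> (nat \<Rightarrow> nat \<Rightarrow> real) \<Rightarrow> (nat \<Rightarrow> real) \<Rightarrow> (nat \<Rightarrow> real) set" where
  "util_set n mu v = {u. \<exists>P. ranking_tensor n P \<and>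
       (\<forall>i. u i = (if i \<in> {1..n} then utility n mu v P i else 0))}"

definition psi :: "real \<Rightarrow> real \<Rightarrow> ereal" where
  "psi x \<alpha> =
     (if \<alpha> > 0 then ereal (x powr \<alpha>)
      else if x = 0 then -\<infinity>
      else if \<alpha> = 0 then ereal (ln x)
      else ereal (- (x powr \<alpha>)))"

definition welfare :: "nat \<Rightarrow> real \<Rightarrow> (nat \<Rightarrow> real) \<Rightarrow> ereal" where
  "welfare n \<alpha> u = (\<Sum>i\<in>{1..n}. psi (u i) \<alpha>)"

definition welfare_maximizer :: "nat \<Rightarrow> (nat \<Rightarrow> nat \<Rightarrow> real) \<Rightarrow> (nat \<Rightarrow> real) \<Rightarrow> real
    \<Rightarrow> (nat \<Rightarrow> real) \<Rightarrow> bool" where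
  "welfare_maximizer n mu v \<alpha> u \<longleftrightarrow>
     u \<in> util_set n mu v \<and> (\<forall>u'\<in>util_set n mu v. welfare n \<alpha> u' \<le> welfare n \<alpha> u)"

definition disp :: "nat \<Rightarrow> (nat \<Rightarrow> real) \<Rightarrow> real" where
  "disp n u = (1 / real n) * (\<Sum>j\<in>{1..n}. (u j - (1 / real n) * (\<Sum>j'\<in>{1..n}. u j')) ^ 2)"

definition F_eq :: "nat \<Rightarrow> real \<Rightarrow> (nat \<Rightarrow> real) \<Rightarrow> real" where
  "F_eq n \<beta> u = (\<Sum>i\<in>{1..n}. u i) - \<beta> * sqrt (disp n u)"

definition eq_opt_set :: "nat \<Rightarrow> (nat \<Rightarrow> nat \<Rightarrow> real) \<Rightarrow> (nat \<Rightarrow> real) \<Rightarrow> real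
    \<Rightarrow> (nat \<Rightarrow> real) set" where
  "eq_opt_set n mu v \<beta> = {u \<in> util_set n mu v. \<forall>u'\<in>util_set n mu v. F_eq n \<beta> u' \<le> F_eq n \<beta> u}"

end

theory Submission
  imports Defs
begin


definition mu0 :: "nat \<Rightarrow> nat \<Rightarrow> real" where
  "mu0 i j = (if (i \<le> 2) = (j \<le> 2) then 0 else 1)"
definition v0 :: "nat \<Rightarrow> real" where
  "v0 k = (if k = 1 then 1 else 0)"

lemma exists_bij_fix:
  assumes "finite K" "finite J" "card K = card J" "k0 \<in> K" "j0 \<in> J"
  shows "\<exists>h. bij_betw h K J \<and> h k0 = j0"
proof -
  have "card (K - {k0}) = card (J - {j0})" using assms by simp
  then obtain g where g: "bij_betw g (K - {k0}) (J - {j0})"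
    using finite_same_card_bij[of "K - {k0}" "J - {j0}"] assms by blast
  define h where "h = g(k0 := j0)"
  have "bij_betw h (K - {k0}) (J - {j0})"
    using g unfolding h_def bij_betw_def inj_on_def by auto
  moreover have "bij_betw h {k0} {j0}" unfolding h_def by simp
  ultimately have "bij_betw h ((K - {k0}) \<union> {k0}) ((J - {j0}) \<union> {j0})"
    by (rule bij_betw_combine) auto
  moreover have "(K - {k0}) \<union> {k0} = K" "(J - {j0}) \<union> {j0} = J" using assms by auto
  ultimately show ?thesis unfolding h_def by auto
qed


lemma tensor_from_t:
  assumes n: "n \<ge> 5" and t: "\<forall>i\<in>{1..n}. t i \<in> {1..n} - {i}"
  shows "\<exists>P. ranking_tensor n P \<and> (\<forall>i\<in>{1..n}. \<forall>j\<in>{1..n}-{i}. expo n v0 P i j = (if j = t i then 1 else 0))"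
proof -
  have "\<forall>i\<in>{1..n}. \<exists>h. bij_betw h {1..n-1} ({1..n}-{i}) \<and> h 1 = t i"
  proof
    fix i assume i: "i \<in> {1..n}"
    have "card {1..n-1} = card ({1..n}-{i})" using i by simp
    moreover have "(1::nat) \<in> {1..n-1}" using n by simp
    moreover have "t i \<in> {1..n}-{i}" using t i by blast
    ultimately show "\<exists>h. bij_betw h {1..n-1} ({1..n}-{i}) \<and> h 1 = t i"
      using exists_bij_fix[of "{1..n-1}" "{1..n}-{i}" 1 "t i"] by blast
  qed
  from bchoice[OF this] obtain H where H0: "\<forall>i\<in>{1..n}. bij_betw (H i) {1..n-1} ({1..n}-{i}) \<and> H i 1 = t i"
    by blast
  have H: "\<And>i. i \<in> {1..n} \<Longrightarrow> bij_betw (H i) {1..n-1} ({1..n}-{i}) \<and> H i 1 = t i"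
    using H0 by blast
  define P where "P = (\<lambda>i j k. if j = H i k then (1::real) else 0)"
  have rt: "ranking_tensor n P"
    unfolding ranking_tensor_def
  proof (rule ballI, intro conjI)
    fix i assume i: "i \<in> {1..n}"
    show "\<forall>j\<in>{1..n} - {i}. \<forall>k\<in>{1..n - 1}. 0 \<le> P i j k" unfolding P_def by auto
    show "\<forall>j\<in>{1..n} - {i}. (\<Sum>k = 1..n - 1. P i j k) = 1"
    proof
      fix j assume j: "j \<in> {1..n} - {i}"
      have "(\<Sum>k = 1..n - 1. P i j k) = (\<Sum>k = 1..n - 1. (\<lambda>j'. if j = j' then (1::real) else 0) (H i k))"
        unfolding P_def by (rule refl)
      also have "\<dots> = (\<Sum>j'\<in>{1..n}-{i}. if j = j' then (1::real) else 0)"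
        using H[OF i] by (intro sum.reindex_bij_betw) blast
      also have "\<dots> = 1" using j by simp
      finally show "(\<Sum>k = 1..n - 1. P i j k) = 1" .
    qed
    show "\<forall>k\<in>{1..n - 1}. (\<Sum>j\<in>{1..n} - {i}. P i j k) = 1"
    proof
      fix k assume k: "k \<in> {1..n-1}"
      have mem: "H i k \<in> {1..n} - {i}" using bij_betw_apply[OF conjunct1[OF H[OF i]] k] .
      have "(\<Sum>j\<in>{1..n} - {i}. P i j k) = (\<Sum>j\<in>{1..n} - {i}. if j = H i k then 1 else 0)"
        unfolding P_def by (rule refl)
      also have "\<dots> = (if H i k \<in> {1..n}-{i} then 1 else 0)" by (rule sum.delta) simp
      also have "\<dots> = 1" by (rule if_P[OF mem])
      finally show "(\<Sum>j\<in>{1..n} - {i}. P i j k) = 1" .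
    qed
  qed
  moreover have "\<forall>i\<in>{1..n}. \<forall>j\<in>{1..n}-{i}. expo n v0 P i j = (if j = t i then 1 else 0)"
  proof (intro ballI)
    fix i j assume i: "i \<in> {1..n}" and j: "j \<in> {1..n}-{i}"
    have "expo n v0 P i j = (\<Sum>k\<in>{1..n-1}. if k = 1 then (if j = H i 1 then 1 else 0) else 0)"
      unfolding expo_def P_def v0_def by (rule sum.cong) auto
    also have "\<dots> = (if j = H i 1 then 1 else 0)"
    proof -
      have "(1::nat) \<in> {1..n-1}" using n by simp
      then show ?thesis by (simp only: sum.delta finite_atLeastAtMost if_True)
    qed
    finally show "expo n v0 P i j = (if j = t i then 1 else 0)" using H[OF i] by simp
  qed
  ultimately show ?thesis by blast
qed


lemma sumA: assumes "a \<in> {1,2}" "n \<ge> 5"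
  shows "(\<Sum>j\<in>{1..n}-{a}. mu0 a j * f j) = (\<Sum>j\<in>{3..n}. f j)"
proof -
  have "(\<Sum>j\<in>{1..n}-{a}. mu0 a j * f j) = (\<Sum>j\<in>{3..n}. mu0 a j * f j)"
    by (rule sum.mono_neutral_right) (use assms in \<open>auto simp: mu0_def\<close>)
  also have "\<dots> = (\<Sum>j\<in>{3..n}. f j)"
    by (rule sum.cong) (use assms in \<open>auto simp: mu0_def\<close>)
  finally show ?thesis .
qed

lemma sumB: assumes "b \<in> {3..n}" "n \<ge> 5"
  shows "(\<Sum>j\<in>{1..n}-{b}. mu0 b j * f j) = f 1 + f 2"
proof -
  have "(\<Sum>j\<in>{1..n}-{b}. mu0 b j * f j) = (\<Sum>j\<in>{1,2}. mu0 b j * f j)"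
    by (rule sum.mono_neutral_right) (use assms in \<open>auto simp: mu0_def\<close>)
  also have "\<dots> = f 1 + f 2" using assms by (simp add: mu0_def)
  finally show ?thesis .
qed

lemma util_half:
  assumes n: "n \<ge> 5"
  shows "utility n mu0 v0 P 1 + utility n mu0 v0 P 2 = (\<Sum>b\<in>{3..n}. utility n mu0 v0 P b)"
proof -
  let ?e = "expo n v0 P"
  have u1: "utility n mu0 v0 P 1 = (\<Sum>j\<in>{3..n}. ?e 1 j) + (\<Sum>j\<in>{3..n}. ?e j 1)"
    unfolding utility_def using sumA[of 1 n] n by simp
  have u2: "utility n mu0 v0 P 2 = (\<Sum>j\<in>{3..n}. ?e 2 j) + (\<Sum>j\<in>{3..n}. ?e j 2)"
    unfolding utility_def using sumA[of 2 n] n by simp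
  have ub: "utility n mu0 v0 P b = (?e b 1 + ?e b 2) + (?e 1 b + ?e 2 b)" if "b \<in> {3..n}" for b
    unfolding utility_def using sumB[OF that n] by simp
  have "(\<Sum>b\<in>{3..n}. utility n mu0 v0 P b) = (\<Sum>b\<in>{3..n}. (?e b 1 + ?e b 2) + (?e 1 b + ?e 2 b))"
    by (rule sum.cong) (use ub in auto)
  also have "\<dots> = (\<Sum>j\<in>{3..n}. ?e 1 j) + (\<Sum>j\<in>{3..n}. ?e j 1) + ((\<Sum>j\<in>{3..n}. ?e 2 j) + (\<Sum>j\<in>{3..n}. ?e j 2))"
    by (simp add: sum.distrib)
  finally show ?thesis using u1 u2 by simp
qed

lemma split_sum: fixes n :: nat assumes "n \<ge> 5" shows "(\<Sum>i\<in>{1..n}. f i) = f 1 + f 2 + (\<Sum>i\<in>{3..n}. (f i::real))"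
proof -
  have "{1..n} = {1,2} \<union> {3..n}" using assms by auto
  then have "(\<Sum>i\<in>{1..n}. f i) = (\<Sum>i\<in>{1,2}. f i) + (\<Sum>i\<in>{3..n}. f i)"
    by (simp add: sum.union_disjoint)
  then show ?thesis by simp
qed

lemma util_nonneg:
  assumes "ranking_tensor n P" "i \<in> {1..n}"
  shows "utility n mu0 v0 P i \<ge> 0"
proof -
  have e: "expo n v0 P a b \<ge> 0" if "a \<in> {1..n}" "b \<in> {1..n} - {a}" for a b
    unfolding expo_def using assms(1) that
    by (intro sum_nonneg) (auto simp: ranking_tensor_def v0_def)
  have m: "mu0 a b \<ge> 0" for a b by (simp add: mu0_def)
  show ?thesis unfolding utility_def
    using assms(2) by (intro add_nonneg_nonneg sum_nonneg mult_nonneg_nonneg m e) auto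
qed

lemma us_nonneg: "u \<in> util_set n mu0 v0 \<Longrightarrow> u i \<ge> 0"
  unfolding util_set_def using util_nonneg by fastforce

lemma us_half:
  assumes "u \<in> util_set n mu0 v0" "n \<ge> 5"
  shows "u 1 + u 2 = (\<Sum>i\<in>{1..n}. u i) / 2"
proof -
  obtain P where P: "\<forall>i. u i = (if i \<in> {1..n} then utility n mu0 v0 P i else 0)"
    using assms(1) unfolding util_set_def by blast
  have "(\<Sum>i\<in>{3..n}. u i) = (\<Sum>i\<in>{3..n}. utility n mu0 v0 P i)"
    by (rule sum.cong) (use P in auto)
  moreover have "u 1 = utility n mu0 v0 P 1" "u 2 = utility n mu0 v0 P 2" using P assms(2) by auto
  ultimately show ?thesis using split_sum[OF assms(2), of u] util_half[OF assms(2), of P] by simp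
qed

lemma us_convex:
  assumes "u \<in> util_set n mu0 v0" "w \<in> util_set n mu0 v0" "0 \<le> t" "t \<le> 1"
  shows "(\<lambda>i. (1-t) * u i + t * w i) \<in> util_set n mu0 v0"
proof -
  obtain P where P: "ranking_tensor n P" "\<forall>i. u i = (if i \<in> {1..n} then utility n mu0 v0 P i else 0)"
    using assms(1) unfolding util_set_def by blast
  obtain Q where Q: "ranking_tensor n Q" "\<forall>i. w i = (if i \<in> {1..n} then utility n mu0 v0 Q i else 0)"
    using assms(2) unfolding util_set_def by blast
  define R where "R = (\<lambda>i j k. (1-t) * P i j k + t * Q i j k)"
  have "ranking_tensor n R"
    using P(1) Q(1) assms(3,4) unfolding ranking_tensor_def R_def
    by (auto simp: sum.distrib sum_distrib_left[symmetric])
  moreover have "expo n v0 R i j = (1-t) * expo n v0 P i j + t * expo n v0 Q i j" for i j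
  proof -
    have "expo n v0 R i j = (\<Sum>k\<in>{1..n-1}. (1-t)*(P i j k * v0 k) + t*(Q i j k * v0 k))"
      unfolding expo_def R_def by (rule sum.cong) (auto simp: algebra_simps)
    also have "\<dots> = (1-t) * expo n v0 P i j + t * expo n v0 Q i j"
      unfolding expo_def by (simp only: sum.distrib sum_distrib_left)
    finally show ?thesis .
  qed
  then have "utility n mu0 v0 R i = (1-t) * utility n mu0 v0 P i + t * utility n mu0 v0 Q i" for i
  proof -
    assume ex: "\<And>i j. expo n v0 R i j = (1-t) * expo n v0 P i j + t * expo n v0 Q i j"
    have "utility n mu0 v0 R i = (\<Sum>j\<in>{1..n}-{i}. (1-t)*(mu0 i j * expo n v0 P i j) + t*(mu0 i j * expo n v0 Q i j))
       + (\<Sum>j\<in>{1..n}-{i}. (1-t)*(mu0 i j * expo n v0 P j i) + t*(mu0 i j * expo n v0 Q j i))"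
      unfolding utility_def ex by (intro arg_cong2[where f="(+)"] sum.cong) (auto simp: algebra_simps)
    also have "\<dots> = (1-t) * utility n mu0 v0 P i + t * utility n mu0 v0 Q i"
      unfolding utility_def by (simp only: sum.distrib sum_distrib_left distrib_left add_ac)
    finally show ?thesis .
  qed
  ultimately show ?thesis unfolding util_set_def using P(2) Q(2) by auto
qed



definition t0 :: "nat \<Rightarrow> nat" where
  "t0 i = (if i = 1 then 2 else if i = 2 then 1 else if i = 3 then 4 else 3)"
definition t1 :: "nat \<Rightarrow> nat" where
  "t1 i = (if i \<le> 2 then 3 else 1)"

lemma zero_in: assumes n: "n \<ge> 5" shows "(\<lambda>i. 0) \<in> util_set n mu0 v0"
proof -
  have t: "\<forall>i\<in>{1..n}. t0 i \<in> {1..n} - {i}" using n by (auto simp: t0_def)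
  obtain P where P: "ranking_tensor n P"
    "\<forall>i\<in>{1..n}. \<forall>j\<in>{1..n}-{i}. expo n v0 P i j = (if j = t0 i then 1 else 0)"
    using tensor_from_t[OF n t] by blast
  have m1: "mu0 j (t0 j) = 0" if "j \<ge> 1" for j using that by (simp add: mu0_def t0_def)
  have m2: "mu0 (t0 j) j = 0" if "j \<ge> 1" for j using that by (simp add: mu0_def t0_def)
  have "utility n mu0 v0 P i = 0" if i: "i \<in> {1..n}" for i
  proof -
    have a: "(\<Sum>j\<in>{1..n}-{i}. mu0 i j * expo n v0 P i j) = 0"
    proof (rule sum.neutral, rule ballI)
      fix j assume j: "j \<in> {1..n}-{i}"
      show "mu0 i j * expo n v0 P i j = 0" using P(2) i j m1[of i] by auto
    qed
    have b: "(\<Sum>j\<in>{1..n}-{i}. mu0 i j * expo n v0 P j i) = 0"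
    proof (rule sum.neutral, rule ballI)
      fix j assume j: "j \<in> {1..n}-{i}"
      have "i \<in> {1..n} - {j}" using i j by auto
      then have "expo n v0 P j i = (if i = t0 j then 1 else 0)" using P(2) j by blast
      then show "mu0 i j * expo n v0 P j i = 0" using m2[of j] j by auto
    qed
    show ?thesis unfolding utility_def a b by simp
  qed
  then show ?thesis unfolding util_set_def using P(1) by auto
qed

lemma pos_in: assumes n: "n \<ge> 5" shows "\<exists>w\<in>util_set n mu0 v0. \<forall>i\<in>{1..n}. w i \<ge> 1"
proof -
  have t: "\<forall>i\<in>{1..n}. t1 i \<in> {1..n} - {i}" using n by (auto simp: t1_def)
  obtain P where P: "ranking_tensor n P"
    "\<forall>i\<in>{1..n}. \<forall>j\<in>{1..n}-{i}. expo n v0 P i j = (if j = t1 i then 1 else 0)"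
    using tensor_from_t[OF n t] by blast
  define w where "w = (\<lambda>i. if i \<in> {1..n} then utility n mu0 v0 P i else 0)"
  have "w \<in> util_set n mu0 v0" unfolding util_set_def w_def using P(1) by auto
  moreover have "w i \<ge> 1" if i: "i \<in> {1..n}" for i
  proof -
    have ti: "t1 i \<in> {1..n}-{i}" using t i by blast
    have "1 = mu0 i (t1 i) * expo n v0 P i (t1 i)" using P(2) i ti by (simp add: mu0_def t1_def)
    also have "\<dots> \<le> (\<Sum>j\<in>{1..n}-{i}. mu0 i j * expo n v0 P i j)"
    proof (rule member_le_sum[OF ti])
      fix x assume x: "x \<in> {1..n} - {i} - {t1 i}"
      show "0 \<le> mu0 i x * expo n v0 P i x" using P(2) i x by (simp add: mu0_def)
    qed simp
    also have "\<dots> \<le> utility n mu0 v0 P i"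
    proof -
      have "0 \<le> (\<Sum>j\<in>{1..n}-{i}. mu0 i j * expo n v0 P j i)"
      proof (rule sum_nonneg)
        fix j assume j: "j \<in> {1..n}-{i}"
        have "i \<in> {1..n} - {j}" using i j by auto
        then show "0 \<le> mu0 i j * expo n v0 P j i" using P(2) j by (simp add: mu0_def)
      qed
      then show ?thesis unfolding utility_def by simp
    qed
    finally show ?thesis using i unfolding w_def by simp
  qed
  ultimately show ?thesis by blast
qed

lemma sq_half: "(x::real)^2 + y^2 \<ge> (x + y)^2 / 2"
proof -
  have "0 \<le> (x - y)^2" by simp
  moreover have "x^2 + y^2 - (x + y)^2 / 2 = (x - y)^2 / 2" by (simp add: power2_eq_square field_simps)
  ultimately show ?thesis by linarith
qed

lemma eq_zero:
  assumes n: "n \<ge> 5" and beta: "\<beta> \<ge> 8 * real n ^ 3 + 1"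
    and s: "s \<in> eq_opt_set n mu0 v0 \<beta>"
  shows "\<forall>i\<in>{1..n}. s i = 0"
proof -
  define N where "N = real n"
  have N5: "N \<ge> 5" using n unfolding N_def by simp
  have sU: "s \<in> util_set n mu0 v0" and opt: "F_eq n \<beta> (\<lambda>i. 0) \<le> F_eq n \<beta> s"
    using s zero_in[OF n] unfolding eq_opt_set_def by auto
  define S where "S = (\<Sum>i\<in>{1..n}. s i)"
  define D where "D = disp n s"
  have F0: "F_eq n \<beta> (\<lambda>i. 0) = 0" unfolding F_eq_def disp_def by simp
  have b0: "\<beta> \<ge> 1" using beta by (simp add: order_trans[OF _ beta])
  have "F_eq n \<beta> s \<ge> 0" using opt F0 by simp
  then have S_ge: "S \<ge> \<beta> * sqrt D" unfolding F_eq_def S_def D_def by simp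
  have D0: "D \<ge> 0" unfolding D_def disp_def by (intro mult_nonneg_nonneg sum_nonneg) auto
  have S0: "S \<ge> 0" unfolding S_def using us_nonneg[OF sU] by (simp add: sum_nonneg)
  have "S^2 \<ge> (\<beta> * sqrt D)^2"
    using S_ge b0 D0 by (intro power_mono) auto
  then have SD: "S^2 \<ge> \<beta>^2 * D" using D0 by (simp add: power_mult_distrib)
  define m where "m = (1 / N) * S"
  have Dform: "D = (1/N) * (\<Sum>j\<in>{1..n}. (s j - m)^2)"
    unfolding D_def disp_def m_def S_def N_def by simp
  have "(\<Sum>j\<in>{1..n}. (s j - m)^2) = (s 1 - m)^2 + (s 2 - m)^2 + (\<Sum>j\<in>{3..n}. (s j - m)^2)"
    by (rule split_sum[OF n])
  also have "\<dots> \<ge> (s 1 - m)^2 + (s 2 - m)^2" by (simp add: sum_nonneg)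
  finally have sq: "(\<Sum>j\<in>{1..n}. (s j - m)^2) \<ge> (s 1 - m)^2 + (s 2 - m)^2" .
  have half: "s 1 + s 2 = S / 2" using us_half[OF sU n] unfolding S_def .
  have "(s 1 - m) + (s 2 - m) = S/2 - 2*m" using half by linarith
  also have "\<dots> = S * (N - 4) / (2 * N)" unfolding m_def using N5 by (simp add: field_simps)
  finally have xy: "(s 1 - m) + (s 2 - m) = S * (N - 4) / (2 * N)" .
  have "(s 1 - m)^2 + (s 2 - m)^2 \<ge> ((s 1 - m) + (s 2 - m))^2 / 2"
    by (rule sq_half)
  then have "(s 1 - m)^2 + (s 2 - m)^2 \<ge> (S * (N - 4) / (2 * N))^2 / 2" using xy by simp
  also have "(S * (N - 4) / (2 * N))^2 / 2 = S^2 * (N-4)^2 / (8 * N^2)"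
    using N5 by (simp add: field_simps power2_eq_square)
  also have "\<dots> \<ge> S^2 / (8 * N^2)"
  proof -
    have "(N-4)^2 \<ge> 1" using N5 by (smt (verit) one_le_power)
    then have "S^2 * 1 \<le> S^2 * (N-4)^2" by (intro mult_left_mono) auto
    then show ?thesis using N5 by (intro divide_right_mono) auto
  qed
  finally have "(\<Sum>j\<in>{1..n}. (s j - m)^2) \<ge> S^2 / (8 * N^2)" using sq by linarith
  then have "D \<ge> (1/N) * (S^2 / (8 * N^2))" unfolding Dform using N5
    by (intro mult_left_mono) auto
  then have DS: "D * (8 * N^3) \<ge> S^2" using N5 by (simp add: field_simps power2_eq_square power3_eq_cube)
  have bb: "\<beta>^2 \<ge> 8 * N^3 + 1"
  proof -
    have "\<beta> \<ge> 8 * N^3 + 1" using beta unfolding N_def .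
    moreover have "\<beta>^2 \<ge> \<beta>" using b0 by (simp add: power2_eq_square)
    ultimately show ?thesis by linarith
  qed
  have "S^2 * (8 * N^3) \<ge> \<beta>^2 * D * (8 * N^3)" using SD N5 by (intro mult_right_mono) auto
  also have "\<beta>^2 * D * (8 * N^3) \<ge> \<beta>^2 * S^2" using DS
    by (metis mult.assoc mult_left_mono zero_le_power2)
  finally have "S^2 * (8 * N^3) \<ge> \<beta>^2 * S^2" .
  moreover have "\<beta>^2 * S^2 \<ge> (8 * N^3 + 1) * S^2" using bb by (intro mult_right_mono) auto
  moreover have "(8 * N^3 + 1) * S^2 = S^2 * (8 * N^3) + S^2" by (simp add: algebra_simps)
  ultimately have "S^2 \<le> 0" by linarith
  then have "S^2 = 0" using zero_le_power2[of S] by linarith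
  then have "S = 0" by simp
  then show ?thesis unfolding S_def using us_nonneg[OF sU]
    by (subst (asm) sum_nonneg_eq_0_iff) auto
qed



lemma psi_not_inf: "psi x a \<noteq> \<infinity>"
  unfolding psi_def by auto

lemma wm_pos:
  assumes n: "n \<ge> 5" and a1: "\<alpha> < 1" and wm: "welfare_maximizer n mu0 v0 \<alpha> ua"
  shows "\<forall>i\<in>{1..n}. ua i > 0"
proof (rule ccontr)
  assume "\<not> (\<forall>i\<in>{1..n}. ua i > 0)"
  then obtain i where i: "i \<in> {1..n}" and "\<not> ua i > 0" by blast
  have uaU: "ua \<in> util_set n mu0 v0" and mx: "\<And>u'. u' \<in> util_set n mu0 v0 \<Longrightarrow> welfare n \<alpha> u' \<le> welfare n \<alpha> ua"
    using wm unfolding welfare_maximizer_def by auto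
  have ua0: "ua i = 0" using \<open>\<not> ua i > 0\<close> us_nonneg[OF uaU, of i] by linarith
  have uan: "\<And>j. ua j \<ge> 0" using us_nonneg[OF uaU] .
  obtain w where wU: "w \<in> util_set n mu0 v0" and w1: "\<forall>j\<in>{1..n}. w j \<ge> 1" using pos_in[OF n] by blast
  have wn: "\<And>j. w j \<ge> 0" using us_nonneg[OF wU] .
  show False
  proof (cases "\<alpha> \<le> 0")
    case True
    define g where "g x = (if \<alpha> = 0 then ln x else - (x powr \<alpha>))" for x
    have "welfare n \<alpha> w = (\<Sum>j\<in>{1..n}. ereal (g (w j)))"
      unfolding welfare_def
    proof (rule sum.cong)
      fix j assume j: "j \<in> {1..n}"
      then have "w j \<noteq> 0" using w1 by force
      then show "psi (w j) \<alpha> = ereal (g (w j))" using True unfolding psi_def g_def by auto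
    qed simp
    then have wf: "welfare n \<alpha> w = ereal (\<Sum>j\<in>{1..n}. g (w j))" by simp
    have "welfare n \<alpha> ua = psi (ua i) \<alpha> + (\<Sum>j\<in>{1..n}-{i}. psi (ua j) \<alpha>)"
      unfolding welfare_def using i by (simp add: sum.remove)
    moreover have "psi (ua i) \<alpha> = -\<infinity>" using ua0 True unfolding psi_def by simp
    moreover have "(\<Sum>j\<in>{1..n}-{i}. psi (ua j) \<alpha>) \<noteq> \<infinity>"
      using psi_not_inf by (simp add: sum_Pinfty)
    ultimately have "welfare n \<alpha> ua = -\<infinity>" by simp
    then show False using mx[OF wU] wf by simp
  next
    case False
    then have a0: "\<alpha> > 0" by simp
    have wel: "welfare n \<alpha> u = ereal (\<Sum>j\<in>{1..n}. u j powr \<alpha>)" for u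
      unfolding welfare_def psi_def using a0 by simp
    define K where "K = (\<Sum>j\<in>{1..n}. ua j powr \<alpha>)"
    have K0: "K \<ge> 0" unfolding K_def by (simp add: sum_nonneg)
    define t where "t = (1 / (K + 2)) powr (1 / (1 - \<alpha>))"
    have tpos: "t > 0" unfolding t_def using K0 by simp
    have tle: "t \<le> 1" unfolding t_def using K0 a1 by (intro powr_le1) auto
    have "t powr (1 - \<alpha>) = 1 / (K + 2)"
      unfolding t_def powr_powr using a1 K0 by simp
    then have "t = t powr \<alpha> * (1 / (K + 2))"
      using powr_add[of t \<alpha> "1 - \<alpha>"] tpos by simp
    then have tal: "t powr \<alpha> = t * (K + 2)" using K0 by (simp add: field_simps)
    define wt where "wt = (\<lambda>j. (1 - t) * ua j + t * w j)"
    have wtU: "wt \<in> util_set n mu0 v0" unfolding wt_def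
      using us_convex[OF uaU wU] tpos tle by simp
    have tm: "wt j powr \<alpha> \<ge> (1 - t) * ua j powr \<alpha> + (if j = i then t powr \<alpha> else 0)"
      if j: "j \<in> {1..n}" for j
    proof (cases "j = i")
      case True
      have "t \<le> wt j" unfolding wt_def using True ua0 w1 j tpos
        by (simp add: mult_le_cancel_left1)
      then have "t powr \<alpha> \<le> wt j powr \<alpha>" using a0 tpos by (intro powr_mono2) auto
      then show ?thesis using True ua0 by simp
    next
      case False
      have "(1 - t) * ua j \<le> wt j" unfolding wt_def using tpos wn[of j] by simp
      then have "((1 - t) * ua j) powr \<alpha> \<le> wt j powr \<alpha>"
        using a0 tle uan[of j] by (intro powr_mono2) auto
      moreover have "((1 - t) * ua j) powr \<alpha> = (1 - t) powr \<alpha> * ua j powr \<alpha>"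
        using tle uan[of j] by (simp add: powr_mult)
      moreover have "(1 - t) \<le> (1 - t) powr \<alpha>"
      proof (cases "t = 1")
        case True then show ?thesis by simp
      next
        case False
        then have "1 - t > 0" using tle by simp
        then have "(1 - t) powr 1 \<le> (1 - t) powr \<alpha>"
          using a1 tpos by (intro powr_mono') auto
        then show ?thesis using \<open>1 - t > 0\<close> by simp
      qed
      then have "(1 - t) * ua j powr \<alpha> \<le> (1 - t) powr \<alpha> * ua j powr \<alpha>"
        by (intro mult_right_mono) auto
      ultimately show ?thesis using False by simp
    qed
    have "(\<Sum>j\<in>{1..n}. (1 - t) * ua j powr \<alpha> + (if j = i then t powr \<alpha> else 0))
          \<le> (\<Sum>j\<in>{1..n}. wt j powr \<alpha>)"
      by (rule sum_mono) (rule tm)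
    moreover have "(\<Sum>j\<in>{1..n}. (1 - t) * ua j powr \<alpha> + (if j = i then t powr \<alpha> else 0))
          = (1 - t) * K + t powr \<alpha>"
      unfolding K_def using i by (simp add: sum.distrib sum_distrib_left)
    ultimately have "(\<Sum>j\<in>{1..n}. wt j powr \<alpha>) \<ge> K + 2 * t"
      using tal by (simp add: algebra_simps)
    then have "(\<Sum>j\<in>{1..n}. wt j powr \<alpha>) > K" using tpos by linarith
    then have "welfare n \<alpha> wt > welfare n \<alpha> ua" unfolding wel K_def by simp
    then show False using mx[OF wtU] by simp
  qed
qed

theorem proposition3:
  fixes n :: nat
  assumes "n \<ge> 5"
  shows "\<exists>(mu :: nat \<Rightarrow> nat \<Rightarrow> real) (v :: nat \<Rightarrow> real). rr_task n mu v \<and>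
    (\<forall>\<alpha>::real. \<alpha> < 1 \<longrightarrow> (\<forall>ua. welfare_maximizer n mu v \<alpha> ua \<longrightarrow>
      (\<forall>s :: real \<Rightarrow> nat \<Rightarrow> real. (\<forall>\<beta>>0. s \<beta> \<in> eq_opt_set n mu v \<beta>) \<longrightarrow>
         (\<exists>\<beta>>0. \<forall>i\<in>{1..n}. ua i > s \<beta> i) \<and>
         ((\<lambda>\<beta>. \<Sum>i\<in>{1..n}. s \<beta> i) \<longlongrightarrow> 0) at_top)))"
proof (rule exI[of _ mu0], rule exI[of _ v0], rule conjI)
  show "rr_task n mu0 v0" unfolding rr_task_def mu0_def v0_def by auto
next
  show "\<forall>\<alpha>::real. \<alpha> < 1 \<longrightarrow> (\<forall>ua. welfare_maximizer n mu0 v0 \<alpha> ua \<longrightarrow>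
      (\<forall>s :: real \<Rightarrow> nat \<Rightarrow> real. (\<forall>\<beta>>0. s \<beta> \<in> eq_opt_set n mu0 v0 \<beta>) \<longrightarrow>
         (\<exists>\<beta>>0. \<forall>i\<in>{1..n}. ua i > s \<beta> i) \<and>
         ((\<lambda>\<beta>. \<Sum>i\<in>{1..n}. s \<beta> i) \<longlongrightarrow> 0) at_top))"
  proof (intro allI impI conjI)
  define b0 where "b0 = 8 * real n ^ 3 + 1"
  have b0p: "b0 > 0" unfolding b0_def by (simp add: add_nonneg_pos)
  fix \<alpha> :: real and ua and s :: "real \<Rightarrow> nat \<Rightarrow> real"
  assume a1: "\<alpha> < 1" and wm: "welfare_maximizer n mu0 v0 \<alpha> ua"
    and s: "\<forall>\<beta>>0. s \<beta> \<in> eq_opt_set n mu0 v0 \<beta>"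
  have z: "\<forall>i\<in>{1..n}. s \<beta> i = 0" if "\<beta> \<ge> b0" for \<beta>
    using eq_zero[OF assms _ , of \<beta> "s \<beta>"] s that b0p unfolding b0_def by auto
  show "\<exists>\<beta>>0. \<forall>i\<in>{1..n}. ua i > s \<beta> i"
    using wm_pos[OF assms a1 wm] z[of b0] b0p by auto
  have "\<forall>\<^sub>F \<beta> in at_top. (\<Sum>i\<in>{1..n}. s \<beta> i) = 0"
    unfolding eventually_at_top_linorder using z by (intro exI[of _ b0]) auto
  then show "((\<lambda>\<beta>. \<Sum>i\<in>{1..n}. s \<beta> i) \<longlongrightarrow> 0) at_top" by (rule tendsto_eventually)
  qed
qed

end
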